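(* Consider the drive Hopfield neural network $$\dot{x}=-Cx+Wf(x)+I,\qquad x\in\mathbb{R}^3,$$ and the response Hopfield neural network $$\dot{y}=-\widetilde{C}y+\widetilde{W}f(y)+\lambda g(x(t)),\qquad y\in\mathbb{R}^3,$$ where $x(t)$ is an output (solution) of the drive network, under the standing assumptions listed in the context. Suppose that there is a constant $L>0$ such that $$\|g(x)-g(\overline{x})\|\ge L\|x-\overline{x}\|\quad\text{for all } x,\overline{x}\in\Lambda_x .$$ Then the response network admits sensitivity, i.e., there exist numbers $\widetilde{\epsilon}>0$ and $\widetilde{\Delta}>0$ such that for every $\widetilde{\delta}>0$, every $\alpha_1\in\Lambda_y$ and every chaotic output $x(t)$ of the drive network, there exist $\alpha_2\in\Lambda_y$, a chaotic output $\widetilde{x}(t)$ of the drive network, and an interval $\widetilde{J}\subset[0,\infty)$ of length at least $\widetilde{\Delta}$ such that $\|\alpha_1-\alpha_2\|<\widetilde{\delta}$ and $$\|\varphi_x(t,0,\alpha_1)-\varphi_{\widetilde{x}}(t,0,\alpha_2)\|>\widetilde{\epsilon}\quad\text{for all } t\in\widetilde{J}.$$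
   Context: Norms: Euclidean norm on vectors, spectral norm on $3\times 3$ matrices. For $u=(u_1,u_2,u_3)^T$, $f(u)=(\tanh u_1,\tanh u_2,\tanh u_3)^T$. In the drive network, $C=\mathrm{diag}(c_1,c_2,c_3)$ with $c_i>0$, $W$ is a real $3\times 3$ matrix and $I\in\mathbb{R}^3$. In the response network, $\widetilde{C}=\mathrm{diag}(\widetilde c_1,\widetilde c_2,\widetilde c_3)$ with $\widetilde c_i>0$, $\widetilde{W}$ is a real $3\times3$ matrix, $\lambda$ is a nonzero real constant, and $g=(g_1,g_2,g_3)^T:\mathbb{R}^3\to\mathbb{R}^3$ with each $g_i$ continuous. Standing assumptions: the drive network possesses a chaotic attractor $\mathcal{A}$, and $\Lambda_x\subset\mathbb{R}^3$ is a compact set, invariant under the flow of the drive network, containing $\mathcal{A}$. A solution $x(t)$ of the drive network is called a chaotic output if $x(0)\in\mathcal{A}$. The drive network is sensitive: there exist $\epsilon>0$ and $\Delta>0$ such that for every $\delta>0$ and every chaotic output $x(t)$ there exist a chaotic output $\widetilde{x}(t)$ and an interval $J\subset[0,\infty)$ of length at least $\Delta$ with $\|x(0)-\widetilde{x}(0)\|<\delta$ and $\|x(t)-\widetilde{x}(t)\|>\epsilon$ for all $t\in J$. There is a bounded set $\Lambda_y\subset\mathbb{R}^3$ which is invariant under the flow of the response network for every chaotic output $x(t)$ of the drive network. For an output $x(t)$ of the drive network, $\varphi_x(t,t_0,\alpha)$ denotes the solution of the response network (driven by $x(t)$) with $\varphi_x(t_0,t_0,\alpha)=\alpha$. *)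

theory Defs
  imports "HOL-Analysis.Analysis"
begin

type_synonym vec3 = "real ^ 3"
type_synonym mat3 = "real ^ 3 ^ 3"

text \<open>Componentwise activation f(u) = (tanh u1, tanh u2, tanh u3).\<close>
definition tanh_vec :: "vec3 \<Rightarrow> vec3" where
  "tanh_vec u = (\<chi> i. tanh (u $ i))"

text \<open>Diagonal matrix diag(c1,c2,c3).\<close>
definition diag3 :: "vec3 \<Rightarrow> mat3" where
  "diag3 c = (\<chi> i j. if i = j then c $ i else 0)"

text \<open>x is a solution (output) of the drive network  x' = -Cx + W f(x) + I  on [0,inf).\<close>
definition drive_sol :: "mat3 \<Rightarrow> mat3 \<Rightarrow> vec3 \<Rightarrow> (real \<Rightarrow> vec3) \<Rightarrow> bool" where
  "drive_sol C W I x \<longleftrightarrow>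
     (\<forall>t\<ge>0. (x has_vector_derivative (- (C *v x t) + W *v tanh_vec (x t) + I)) (at t within {0..}))"

text \<open>y is a solution of the response network  y' = -C~y + W~ f(y) + lambda g(x(t))  on [0,inf),
  driven by the drive output x.\<close>
definition resp_sol ::
  "mat3 \<Rightarrow> mat3 \<Rightarrow> real \<Rightarrow> (vec3 \<Rightarrow> vec3) \<Rightarrow> (real \<Rightarrow> vec3) \<Rightarrow> (real \<Rightarrow> vec3) \<Rightarrow> bool" where
  "resp_sol Ct Wt lam g x y \<longleftrightarrow>
     (\<forall>t\<ge>0. (y has_vector_derivative (- (Ct *v y t) + Wt *v tanh_vec (y t) + lam *\<^sub>R g (x t)))
              (at t within {0..}))"

text \<open>J is an interval contained in [0,inf) whose length is at least D
  (for an interval: it contains an open interval of length D).\<close>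
definition interval_len_ge :: "real set \<Rightarrow> real \<Rightarrow> bool" where
  "interval_len_ge J D \<longleftrightarrow> is_interval J \<and> J \<subseteq> {0..} \<and> (\<exists>a b. D \<le> b - a \<and> {a<..<b} \<subseteq> J)"

end

theory Submission
  imports Defs
begin

lemma vd_bound:
  fixes h :: "real \<Rightarrow> 'a::real_normed_vector"
  assumes d: "\<And>t. t \<ge> 0 \<Longrightarrow> (h has_vector_derivative h' t) (at t within {0..})"
    and B: "\<And>t. t \<ge> 0 \<Longrightarrow> norm (h' t) \<le> B"
    and s: "s \<ge> 0" and t: "t \<ge> 0"
  shows "norm (h t - h s) \<le> B * \<bar>t - s\<bar>"
proof -
  have "norm (h t - h s) \<le> B * norm (t - s)"
  proof (rule differentiable_bound[where f'="\<lambda>t x. x *\<^sub>R h' t" and S="{0..}"])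
    show "convex {0::real..}" by (simp add: convex_real_interval)
    fix x :: real assume "x \<in> {0..}"
    then show "(h has_derivative (\<lambda>y. y *\<^sub>R h' x)) (at x within {0..})"
      using d has_vector_derivative_def by auto
    have "onorm (\<lambda>y::real. y *\<^sub>R h' x) = onorm (\<lambda>y::real. y) * norm (h' x)"
      by (rule onorm_scaleR_left) (rule bounded_linear_ident)
    then show "onorm (\<lambda>y::real. y *\<^sub>R h' x) \<le> B" using B \<open>x \<in> {0..}\<close> by (simp add: onorm_id)
  qed (use s t in auto)
  then show ?thesis by simp
qed

lemma tanh_lip: "\<bar>tanh (a::real) - tanh b\<bar> \<le> \<bar>a - b\<bar>"
proof -
  have D: "\<And>x. (tanh has_real_derivative (1 - tanh x ^ 2)) (at x)"
    by (auto intro!: derivative_eq_intros)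
  have "\<And>x::real. \<bar>1 - tanh x ^ 2\<bar> \<le> 1"
  proof -
    fix x :: real
    have "tanh x ^ 2 < 1" using tanh_real_bounds[of x] by (simp add: abs_square_less_1 abs_if)
    then show "\<bar>1 - tanh x ^ 2\<bar> \<le> 1" by auto
  qed
  then have "norm (tanh a - tanh b) \<le> 1 * norm (a - b)"
    using D by (intro field_differentiable_bound[where S=UNIV and f'="\<lambda>x. 1 - tanh x ^ 2"]) 
      (auto simp: has_field_derivative_at_within)
  then show ?thesis by simp
qed

lemma tanh_vec_lip: "norm (tanh_vec u - tanh_vec v) \<le> norm (u - v)"
  by (rule norm_le_componentwise_cart) (simp add: tanh_vec_def tanh_lip)

lemma mat_bound: "\<exists>K>0. \<forall>v. norm ((M::mat3) *v v) \<le> norm v * K"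
  using bounded_linear.pos_bounded[OF matrix_vector_mul_bounded_linear[of M]] by blast

lemma resp_unique:
  assumes s1: "resp_sol Ct Wt lam g x y1" and s2: "resp_sol Ct Wt lam g x y2"
    and e0: "y1 0 = y2 0" and t: "t \<ge> 0"
  shows "y1 t = y2 t"
proof -
  obtain KC where KC: "KC > 0" "\<forall>v. norm (Ct *v v) \<le> norm v * KC" using mat_bound by blast
  obtain KW where KW: "KW > 0" "\<forall>v. norm (Wt *v v) \<le> norm v * KW" using mat_bound by blast
  define K where "K = KC + KW"
  define w where "w = (\<lambda>t. y1 t - y2 t)"
  define w' where "w' = (\<lambda>t. (- (Ct *v y1 t) + Wt *v tanh_vec (y1 t) + lam *\<^sub>R g (x t))
     - (- (Ct *v y2 t) + Wt *v tanh_vec (y2 t) + lam *\<^sub>R g (x t)))"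
  have dw: "(w has_vector_derivative w' t) (at t within {0..})" if "t \<ge> 0" for t
    unfolding w_def w'_def
    by (rule has_vector_derivative_diff) (use s1 s2 that in \<open>auto simp: resp_sol_def\<close>)
  have w'b: "norm (w' t) \<le> K * norm (w t)" for t
  proof -
    have "w' t = Wt *v (tanh_vec (y1 t) - tanh_vec (y2 t)) - Ct *v (w t)"
      by (simp add: w'_def w_def algebra_simps)
    then have "norm (w' t) \<le> norm (Wt *v (tanh_vec (y1 t) - tanh_vec (y2 t))) + norm (Ct *v (w t))"
      by (simp add: norm_triangle_ineq4)
    also have "\<dots> \<le> norm (tanh_vec (y1 t) - tanh_vec (y2 t)) * KW + norm (w t) * KC"
      using KC KW by (intro add_mono) auto
    also have "\<dots> \<le> norm (w t) * KW + norm (w t) * KC"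
      using tanh_vec_lip[of "y1 t" "y2 t"] KW by (simp add: w_def)
    finally show ?thesis by (simp add: K_def algebra_simps)
  qed
  define q where "q = (\<lambda>t. exp (-(2*K)*t) * (w t \<bullet> w t))"
  define q' where "q' = (\<lambda>t. exp (-(2*K)*t) * (-(2*K)) * (w t \<bullet> w t) + exp (-(2*K)*t) * (2 * (w t \<bullet> w' t)))"
  have dq: "(q has_real_derivative q' t) (at t within {0..})" if "t \<ge> 0" for t
  proof -
    have dw2: "(w has_derivative (\<lambda>h. h *\<^sub>R w' t)) (at t within {0..})"
      using dw[OF that] by (simp add: has_vector_derivative_def)
    have "((\<lambda>t. w t \<bullet> w t) has_derivative (\<lambda>h. w t \<bullet> (h *\<^sub>R w' t) + (h *\<^sub>R w' t) \<bullet> w t)) (at t within {0..})"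
      by (rule has_derivative_inner[OF dw2 dw2])
    also have "(\<lambda>h. w t \<bullet> (h *\<^sub>R w' t) + (h *\<^sub>R w' t) \<bullet> w t) = (*) (2 * (w t \<bullet> w' t))"
      by (auto simp: inner_commute algebra_simps)
    finally have d1: "((\<lambda>t. w t \<bullet> w t) has_real_derivative (2 * (w t \<bullet> w' t))) (at t within {0..})"
      by (simp add: has_field_derivative_def)
    have d2: "((\<lambda>t. exp (-(2*K)*t)) has_real_derivative exp (-(2*K)*t) * (-(2*K))) (at t within {0..})"
      by (auto intro!: derivative_eq_intros)
    show ?thesis unfolding q_def q'_def using DERIV_mult[OF d2 d1] by (simp add: algebra_simps)
  qed
  have q'np: "q' t \<le> 0" for t
  proof -
    have "w t \<bullet> w' t \<le> norm (w t) * norm (w' t)" by (rule norm_cauchy_schwarz)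
    also have "\<dots> \<le> norm (w t) * (K * norm (w t))" by (rule mult_left_mono[OF w'b]) simp
    also have "\<dots> = K * (w t \<bullet> w t)" by (simp add: dot_square_norm power2_eq_square)
    finally have "2 * (w t \<bullet> w' t) + (-(2*K)) * (w t \<bullet> w t) \<le> 0" by simp
    then have "exp (-(2*K)*t) * (2 * (w t \<bullet> w' t) + (-(2*K)) * (w t \<bullet> w t)) \<le> 0"
      by (simp add: mult_nonneg_nonpos)
    then show ?thesis by (simp add: q'_def algebra_simps)
  qed
  show ?thesis
  proof (cases "t = 0")
    case True then show ?thesis using e0 by simp
  next
    case False
    then have tp: "0 < t" using t by simp
    have "\<exists>z\<in>{0<..<t}. q t - q 0 = (\<lambda>h. h * q' z) (t - 0)"
    proof (rule mvt_simple[OF tp])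
      fix z assume "0 \<le> z" "z \<le> t"
      then have "(q has_real_derivative q' z) (at z within {0..t})"
        using dq[of z] by (rule_tac has_field_derivative_subset) auto
      then show "(q has_derivative (\<lambda>h. h * q' z)) (at z within {0..t})"
        by (simp add: has_field_derivative_def mult.commute[of _ "q' z"])
    qed
    then obtain z where "q t - q 0 = t * q' z" by auto
    moreover have "q 0 = 0" using e0 by (simp add: q_def w_def)
    moreover have "t * q' z \<le> 0" using q'np[of z] tp by (simp add: mult_nonneg_nonpos)
    ultimately have "q t \<le> 0" by simp
    then have "w t \<bullet> w t \<le> 0" by (simp add: q_def mult_le_0_iff)
    then have "w t = 0" by (metis inner_eq_zero_iff inner_ge_zero order_antisym)
    then show ?thesis by (simp add: w_def)
  qed
qed

lemma unit_dir:
  fixes w :: "'a::real_inner"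
  assumes "w \<noteq> 0"
  shows "norm (w /\<^sub>R norm w) = 1" "(w /\<^sub>R norm w) \<bullet> w = norm w"
proof -
  show "norm (w /\<^sub>R norm w) = 1" using assms by simp
  have "(w /\<^sub>R norm w) \<bullet> w = (w \<bullet> w) / norm w" by (simp add: divide_inverse_commute)
  also have "\<dots> = norm w" using assms by (simp add: dot_square_norm power2_eq_square)
  finally show "(w /\<^sub>R norm w) \<bullet> w = norm w" .
qed

lemma tanh_vec_0: "tanh_vec 0 = 0"
  by (simp add: tanh_vec_def vec_eq_iff)

lemma tri3: "norm (- p + q + r) \<le> norm p + norm q + (norm r::real)" for p q r :: "'a::real_normed_vector"
proof -
  have "norm (- p + q + r) \<le> norm (-p + q) + norm r" by (rule norm_triangle_ineq)
  also have "norm (-p + q) \<le> norm (-p) + norm q" by (rule norm_triangle_ineq)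
  finally show ?thesis by simp
qed

lemma drive_bound:
  assumes "drive_sol C W I x" and "\<forall>t\<ge>0. x t \<in> Lx" and "\<forall>v\<in>Lx. norm v \<le> Bx"
    and "\<forall>v. norm (C *v v) \<le> norm v * KC" and "\<forall>v. norm (W *v v) \<le> norm v * KW"
    and "KC > 0" "KW > 0" and "t \<ge> 0"
  shows "norm (- (C *v x t) + W *v tanh_vec (x t) + I) \<le> KC * Bx + KW * Bx + norm I"
proof -
  have xb: "norm (x t) \<le> Bx" using assms by auto
  have "norm (- (C *v x t) + W *v tanh_vec (x t) + I) \<le> norm (C *v x t) + norm (W *v tanh_vec (x t)) + norm I"
    by (rule tri3)
  also have "\<dots> \<le> norm (x t) * KC + norm (tanh_vec (x t)) * KW + norm I"
    using assms by (intro add_mono) auto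
  also have "norm (x t) * KC + norm (tanh_vec (x t)) * KW + norm I \<le> Bx * KC + Bx * KW + norm I"
  proof -
    have "norm (tanh_vec (x t)) \<le> norm (x t)"
      using tanh_vec_lip[of "x t" 0] by (simp add: tanh_vec_0)
    then have tb: "norm (tanh_vec (x t)) \<le> Bx" using xb by linarith
    show ?thesis using xb tb assms by (intro add_mono mult_right_mono order_refl) auto
  qed
  finally show ?thesis by (simp add: algebra_simps)
qed

lemma resp_bound:
  assumes "\<forall>t\<ge>0. y t \<in> Ly" and "\<forall>v\<in>Ly. norm v \<le> By" and "\<forall>t\<ge>0. x t \<in> Lx" and "\<forall>v\<in>Lx. norm (g v) \<le> Bg"
    and "\<forall>v. norm (C *v v) \<le> norm v * KC" and "\<forall>v. norm (W *v v) \<le> norm v * KW"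
    and "KC > 0" "KW > 0" and "t \<ge> 0"
  shows "norm (- (C *v y t) + W *v tanh_vec (y t) + lam *\<^sub>R g (x t)) \<le> KC * By + KW * By + \<bar>lam\<bar> * Bg"
proof -
  have yb: "norm (y t) \<le> By" using assms by auto
  have gb: "norm (g (x t)) \<le> Bg" using assms by auto
  have "norm (- (C *v y t) + W *v tanh_vec (y t) + lam *\<^sub>R g (x t)) \<le> norm (C *v y t) + norm (W *v tanh_vec (y t)) + norm (lam *\<^sub>R g (x t))"
    by (rule tri3)
  also have "\<dots> \<le> norm (y t) * KC + norm (tanh_vec (y t)) * KW + \<bar>lam\<bar> * Bg"
    using assms gb by (intro add_mono) (auto intro: mult_left_mono)
  also have "norm (y t) * KC + norm (tanh_vec (y t)) * KW + \<bar>lam\<bar> * Bg \<le> By * KC + By * KW + \<bar>lam\<bar> * Bg"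
  proof -
    have "norm (tanh_vec (y t)) \<le> norm (y t)"
      using tanh_vec_lip[of "y t" 0] by (simp add: tanh_vec_0)
    then have tb: "norm (tanh_vec (y t)) \<le> By" using yb by linarith
    show ?thesis using yb tb assms by (intro add_mono mult_right_mono order_refl) auto
  qed
  finally show ?thesis by (simp add: algebra_simps)
qed

lemma ilg: "interval_len_ge {t0<..<t0+Dt} Dt" if "t0 \<ge> (0::real)"
  unfolding interval_len_ge_def using that
  by (intro conjI exI[of _ t0] exI[of _ "t0+Dt"]) (auto simp: is_interval_convex_1 convex_real_interval)

theorem theorem2:
  fixes c ct :: vec3 and W Wt :: mat3 and I :: vec3 and lam :: real
    and g :: "vec3 \<Rightarrow> vec3" and A Lx Ly :: "vec3 set" and L :: real
  assumes c_pos: "\<forall>i. c $ i > 0"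
    and ct_pos: "\<forall>i. ct $ i > 0"
    and lam_nz: "lam \<noteq> 0"
    and g_cont: "\<forall>i. continuous_on UNIV (\<lambda>v. g v $ i)"
    and Lx_compact: "compact Lx"
    and A_sub: "A \<subseteq> Lx"
    and Lx_inv: "\<forall>x. drive_sol (diag3 c) W I x \<and> x 0 \<in> Lx \<longrightarrow> (\<forall>t\<ge>0. x t \<in> Lx)"
    and drive_sens: "\<exists>eps>0. \<exists>D>0. \<forall>del>0. \<forall>x. drive_sol (diag3 c) W I x \<and> x 0 \<in> A \<longrightarrow>
          (\<exists>xt J. drive_sol (diag3 c) W I xt \<and> xt 0 \<in> A \<and> interval_len_ge J D \<and>
                  norm (x 0 - xt 0) < del \<and> (\<forall>t\<in>J. norm (x t - xt t) > eps))"
    and Ly_bdd: "bounded Ly"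
    and Ly_inv: "\<forall>x y. drive_sol (diag3 c) W I x \<and> x 0 \<in> A \<and> resp_sol (diag3 ct) Wt lam g x y
          \<and> y 0 \<in> Ly \<longrightarrow> (\<forall>t\<ge>0. y t \<in> Ly)"
    and L_pos: "L > 0"
    and g_expand: "\<forall>v\<in>Lx. \<forall>w\<in>Lx. norm (g v - g w) \<ge> L * norm (v - w)"
  shows "\<exists>epst>0. \<exists>Dt>0. \<forall>delt>0. \<forall>a1\<in>Ly. \<forall>x. drive_sol (diag3 c) W I x \<and> x 0 \<in> A \<longrightarrow>
          (\<exists>a2\<in>Ly. \<exists>xt J. drive_sol (diag3 c) W I xt \<and> xt 0 \<in> A \<and> interval_len_ge J Dt \<and>
              norm (a1 - a2) < delt \<and>
              (\<forall>y1 y2. resp_sol (diag3 ct) Wt lam g x y1 \<and> y1 0 = a1 \<and>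
                       resp_sol (diag3 ct) Wt lam g xt y2 \<and> y2 0 = a2 \<longrightarrow>
                       (\<forall>t\<in>J. norm (y1 t - y2 t) > epst)))"
proof -
  obtain eps D where eps: "eps > 0" and D: "D > 0" and sens: "\<forall>del>0. \<forall>x. drive_sol (diag3 c) W I x \<and> x 0 \<in> A \<longrightarrow>
          (\<exists>xt J. drive_sol (diag3 c) W I xt \<and> xt 0 \<in> A \<and> interval_len_ge J D \<and>
                  norm (x 0 - xt 0) < del \<and> (\<forall>t\<in>J. norm (x t - xt t) > eps))"
    using drive_sens by blast
  obtain KC where KC: "KC > 0" "\<forall>v. norm (diag3 c *v v) \<le> norm v * KC" using mat_bound by blast
  obtain KW where KW: "KW > 0" "\<forall>v. norm (W *v v) \<le> norm v * KW" using mat_bound by blast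
  obtain KCt where KCt: "KCt > 0" "\<forall>v. norm (diag3 ct *v v) \<le> norm v * KCt" using mat_bound by blast
  obtain KWt where KWt: "KWt > 0" "\<forall>v. norm (Wt *v v) \<le> norm v * KWt" using mat_bound by blast
  obtain Bx where Bx: "Bx > 0" "\<forall>v\<in>Lx. norm v \<le> Bx"
    using compact_imp_bounded[OF Lx_compact] bounded_pos by blast
  obtain By where By: "By > 0" "\<forall>v\<in>Ly. norm v \<le> By"
    using Ly_bdd bounded_pos by blast
  have gc: "continuous_on UNIV g"
  proof -
    have "continuous_on UNIV (\<lambda>v. \<chi> i. g v $ i)"
      by (rule continuous_on_vec_lambda) (use g_cont in auto)
    then show ?thesis by (simp add: vec_lambda_eta)
  qed
  then have gcL: "continuous_on Lx g" by (rule continuous_on_subset) simp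
  have "bounded (g ` Lx)" using compact_imp_bounded[OF compact_continuous_image[OF gcL Lx_compact]] .
  then obtain Bg where Bg0: "Bg > 0" "\<forall>w\<in>g ` Lx. norm w \<le> Bg" unfolding bounded_pos by blast
  then have Bg: "Bg > 0" "\<forall>v\<in>Lx. norm (g v) \<le> Bg" by auto
  have uc: "uniformly_continuous_on Lx g"
    by (rule compact_uniformly_continuous[OF gcL Lx_compact])
  obtain \<rho> where rho: "\<rho> > 0" "\<forall>v\<in>Lx. \<forall>w\<in>Lx. dist w v < \<rho> \<longrightarrow> dist (g w) (g v) < L * eps / 4"
    using uc[unfolded uniformly_continuous_on_def, rule_format, of "L * eps / 4"] L_pos eps by auto
  define Mx where "Mx = KC * Bx + KW * Bx + norm I + 1"
  define My where "My = KCt * By + KWt * By + \<bar>lam\<bar> * Bg"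
  define Mz where "Mz = 2 * My + 1"
  define V where "V = \<bar>lam\<bar> * L * eps"
  define h where "h = min (D/2) (\<rho> / (2 * Mx))"
  define K where "K = KCt + KWt"
  define e where "e = min (V / (4 * K)) (h * V / 16)"
  define Dt where "Dt = e / (2 * Mz)"
  have Mxp: "Mx > 0" unfolding Mx_def using KC KW Bx by (simp add: add_pos_nonneg)
  have Myp: "My \<ge> 0" unfolding My_def using KCt KWt By Bg by simp
  have Mzp: "Mz > 0" unfolding Mz_def using Myp by simp
  have Vp: "V > 0" unfolding V_def using lam_nz L_pos eps by simp
  have hp: "h > 0" unfolding h_def using D rho Mxp by simp
  have Kp: "K > 0" unfolding K_def using KCt KWt by simp
  have ep: "e > 0" unfolding e_def using Vp Kp hp by simp
  have Dtp: "Dt > 0" unfolding Dt_def using ep Mzp by simp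
  have eK: "K * e \<le> V / 4"
  proof -
    have "K * e \<le> K * (V / (4 * K))" unfolding e_def using Kp by (intro mult_left_mono) auto
    also have "\<dots> = V / 4" using Kp by simp
    finally show ?thesis .
  qed
  have eh: "4 * e \<le> h * V / 4" unfolding e_def by simp
  have main: "\<exists>a2\<in>Ly. \<exists>xt J. drive_sol (diag3 c) W I xt \<and> xt 0 \<in> A \<and> interval_len_ge J Dt \<and>
              norm (a1 - a2) < delt \<and>
              (\<forall>y1 y2. resp_sol (diag3 ct) Wt lam g x y1 \<and> y1 0 = a1 \<and>
                       resp_sol (diag3 ct) Wt lam g xt y2 \<and> y2 0 = a2 \<longrightarrow>
                       (\<forall>t\<in>J. norm (y1 t - y2 t) > e/2))"
    if delt: "delt > 0" and a1: "a1 \<in> Ly" and xA: "drive_sol (diag3 c) W I x \<and> x 0 \<in> A" for delt a1 x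
  proof -
    obtain xt J where xt: "drive_sol (diag3 c) W I xt" "xt 0 \<in> A" and J: "interval_len_ge J D"
      and Jsep: "\<forall>t\<in>J. norm (x t - xt t) > eps"
      using sens delt xA by blast
    obtain a b where ab: "D \<le> b - a" "{a<..<b} \<subseteq> J" and J0: "J \<subseteq> {0..}"
      using J unfolding interval_len_ge_def by blast
    have a0: "a \<ge> 0"
    proof (rule ccontr)
      assume "\<not> a \<ge> 0"
      then have "(a + min b 0)/2 \<in> {a<..<b}" using ab D by auto
      then have "(a + min b 0)/2 \<in> J" using ab(2) by blast
      then have "(a + min b 0)/2 \<ge> 0" using J0 by auto
      then show False using \<open>\<not> a \<ge> 0\<close> by (auto simp: min_def split: if_splits)
    qed
    define s where "s = a + D/4"
    have s0: "s \<ge> 0" unfolding s_def using a0 D by simp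
    have sJ: "t \<in> J" if "s \<le> t" "t \<le> s + h" for t
    proof -
      have "h \<le> D/2" unfolding h_def by simp
      then have "t \<in> {a<..<b}" using that ab D unfolding s_def by auto
      then show ?thesis using ab(2) by blast
    qed
    have xLx: "\<forall>t\<ge>0. x t \<in> Lx" using Lx_inv xA A_sub by blast
    have xtLx: "\<forall>t\<ge>0. xt t \<in> Lx" using Lx_inv xt A_sub by blast
    have xlip: "norm (z t - z s) \<le> Mx * \<bar>t - s\<bar>" if "z = x \<or> z = xt" "t \<ge> 0" for z t
    proof -
      have zs: "drive_sol (diag3 c) W I z" "\<forall>t\<ge>0. z t \<in> Lx" using that xA xt xLx xtLx by auto
      show ?thesis
      proof (rule vd_bound[where h' = "\<lambda>t. - (diag3 c *v z t) + W *v tanh_vec (z t) + I"])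
        show "(z has_vector_derivative - (diag3 c *v z t) + W *v tanh_vec (z t) + I) (at t within {0..})"
          if "t \<ge> 0" for t using zs that unfolding drive_sol_def by auto
        show "norm (- (diag3 c *v z t) + W *v tanh_vec (z t) + I) \<le> Mx" if "t \<ge> 0" for t
          using drive_bound[OF zs(1) zs(2) Bx(2) KC(2) KW(2) KC(1) KW(1) that] unfolding Mx_def by simp
      qed (use s0 that in auto)
    qed
    define v where "v = (\<lambda>t. g (x t) - g (xt t))"
    have vs: "norm (v s) > L * eps"
    proof -
      have "s \<in> J" using sJ[of s] hp by simp
      then have "norm (x s - xt s) > eps" using Jsep by blast
      then have "L * eps < L * norm (x s - xt s)" using L_pos by simp
      also have "\<dots> \<le> norm (v s)" using g_expand xLx xtLx s0 unfolding v_def by auto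
      finally show ?thesis .
    qed
    have vclose: "norm (v t - v s) < L * eps / 2" if "s \<le> t" "t \<le> s + h" for t
    proof -
      have t0: "t \<ge> 0" using that s0 by simp
      have "Mx * \<bar>t - s\<bar> \<le> Mx * h" using that Mxp by (intro mult_left_mono) auto
      also have "\<dots> \<le> Mx * (\<rho> / (2 * Mx))" unfolding h_def using Mxp by (intro mult_left_mono) auto
      also have "\<dots> < \<rho>" using Mxp rho by simp
      finally have lt: "Mx * \<bar>t - s\<bar> < \<rho>" .
      have m1: "x t \<in> Lx" "x s \<in> Lx" "xt t \<in> Lx" "xt s \<in> Lx" using xLx xtLx t0 s0 by auto
      have "norm (x t - x s) < \<rho>" using xlip[of x t] t0 lt by simp
      then have d1: "dist (g (x t)) (g (x s)) < L * eps / 4"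
        using rho(2)[rule_format, of "x s" "x t"] m1 by (simp add: dist_norm)
      have "norm (xt t - xt s) < \<rho>" using xlip[of xt t] t0 lt by simp
      then have d2: "dist (g (xt t)) (g (xt s)) < L * eps / 4"
        using rho(2)[rule_format, of "xt s" "xt t"] m1 by (simp add: dist_norm)
      have "v t - v s = (g (x t) - g (x s)) - (g (xt t) - g (xt s))" unfolding v_def by simp
      then have "norm (v t - v s) \<le> norm (g (x t) - g (x s)) + norm (g (xt t) - g (xt s))"
        by (simp add: norm_triangle_ineq4)
      then show ?thesis using d1 d2 by (simp add: dist_norm)
    qed
    show ?thesis
    proof (cases "\<exists>y1 y2. resp_sol (diag3 ct) Wt lam g x y1 \<and> y1 0 = a1 \<and>
                       resp_sol (diag3 ct) Wt lam g xt y2 \<and> y2 0 = a1")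
      case False
      have "interval_len_ge {0<..<Dt} Dt"
        using ilg[of 0] by simp
      then show ?thesis using a1 xt delt False
        by (intro bexI[of _ a1] exI[of _ xt] exI[of _ "{0<..<Dt}"]) auto
    next
      case True
      then obtain y1 y2 where y1: "resp_sol (diag3 ct) Wt lam g x y1" "y1 0 = a1"
        and y2: "resp_sol (diag3 ct) Wt lam g xt y2" "y2 0 = a1" by blast
      have y1L: "\<forall>t\<ge>0. y1 t \<in> Ly" using Ly_inv xA y1 a1 by blast
      have y2L: "\<forall>t\<ge>0. y2 t \<in> Ly" using Ly_inv xt y2 a1 by blast
      define z where "z = (\<lambda>t. y1 t - y2 t)"
      define y1' where "y1' = (\<lambda>t. - (diag3 ct *v y1 t) + Wt *v tanh_vec (y1 t) + lam *\<^sub>R g (x t))"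
      define y2' where "y2' = (\<lambda>t. - (diag3 ct *v y2 t) + Wt *v tanh_vec (y2 t) + lam *\<^sub>R g (xt t))"
      have dz: "(z has_vector_derivative (y1' t - y2' t)) (at t within {0..})" if "t \<ge> 0" for t
        unfolding z_def y1'_def y2'_def
        by (rule has_vector_derivative_diff) (use y1 y2 that in \<open>auto simp: resp_sol_def\<close>)
      have z'b: "norm (y1' t - y2' t) \<le> Mz" if "t \<ge> 0" for t
      proof -
        have "norm (y1' t) \<le> My" unfolding y1'_def My_def
          by (rule resp_bound[OF y1L By(2) xLx Bg(2) KCt(2) KWt(2) KCt(1) KWt(1) that])
        moreover have "norm (y2' t) \<le> My" unfolding y2'_def My_def
          by (rule resp_bound[OF y2L By(2) xtLx Bg(2) KCt(2) KWt(2) KCt(1) KWt(1) that])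
        ultimately show ?thesis using norm_triangle_ineq4[of "y1' t" "y2' t"] unfolding Mz_def by simp
      qed
      have zlip: "norm (z t - z t0) \<le> Mz * \<bar>t - t0\<bar>" if "t \<ge> 0" "t0 \<ge> 0" for t t0
        by (rule vd_bound[OF dz z'b that(2) that(1)])
      have "\<exists>t0. s \<le> t0 \<and> t0 \<le> s + h \<and> norm (z t0) > e"
      proof (rule ccontr)
        assume "\<not> ?thesis"
        then have zs: "norm (z t) \<le> e" if "s \<le> t" "t \<le> s + h" for t using that by force
        define u where "u = (lam *\<^sub>R v s) /\<^sub>R norm (lam *\<^sub>R v s)"
        have nlv: "norm (lam *\<^sub>R v s) = \<bar>lam\<bar> * norm (v s)" by simp
        have "0 < L * eps" using L_pos eps by simp
        then have "norm (v s) > 0" using vs by linarith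
        then have nlvp: "norm (lam *\<^sub>R v s) > 0" using lam_nz by simp
        have nz: "lam *\<^sub>R v s \<noteq> 0" using nlvp by (metis norm_zero less_irrefl)
        have nu: "norm u = 1" unfolding u_def by (rule unit_dir(1)[OF nz])
        have ulv: "u \<bullet> (lam *\<^sub>R v s) = norm (lam *\<^sub>R v s)"
          unfolding u_def by (rule unit_dir(2)[OF nz])
        define \<phi> where "\<phi> = (\<lambda>t. u \<bullet> z t)"
        have "\<exists>\<xi>\<in>{s<..<s+h}. \<phi> (s+h) - \<phi> s = (\<lambda>r. r * (u \<bullet> (y1' \<xi> - y2' \<xi>))) (s + h - s)"
        proof (rule mvt_simple[of s "s+h" \<phi> "\<lambda>t r. r * (u \<bullet> (y1' t - y2' t))"])
          show "s < s + h" using hp by simp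
          fix t assume t: "s \<le> t" "t \<le> s + h"
          then have "(z has_vector_derivative (y1' t - y2' t)) (at t within {s..s+h})"
            using dz[of t] s0 by (rule_tac has_vector_derivative_within_subset) auto
          then have "(z has_derivative (\<lambda>r. r *\<^sub>R (y1' t - y2' t))) (at t within {s..s+h})"
            by (simp add: has_vector_derivative_def)
          from has_derivative_inner_right[OF this, of u]
          show "(\<phi> has_derivative (\<lambda>r. r * (u \<bullet> (y1' t - y2' t)))) (at t within {s..s+h})"
            unfolding \<phi>_def by simp
        qed
        then obtain \<xi> where xi: "s < \<xi>" "\<xi> < s + h" and mv: "\<phi> (s+h) - \<phi> s = h * (u \<bullet> (y1' \<xi> - y2' \<xi>))"
          by auto
        have xi0: "\<xi> \<ge> 0" using xi s0 by simp
        have decomp: "y1' \<xi> - y2' \<xi> = - (diag3 ct *v z \<xi>) + Wt *v (tanh_vec (y1 \<xi>) - tanh_vec (y2 \<xi>)) + lam *\<^sub>R v \<xi>"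
          unfolding y1'_def y2'_def z_def v_def by (simp add: algebra_simps)
        have zxi: "norm (z \<xi>) \<le> e" using zs xi by simp
        have b1: "\<bar>u \<bullet> (diag3 ct *v z \<xi>)\<bar> \<le> KCt * e"
        proof -
          have "\<bar>u \<bullet> (diag3 ct *v z \<xi>)\<bar> \<le> norm u * norm (diag3 ct *v z \<xi>)" by (rule Cauchy_Schwarz_ineq2)
          also have "\<dots> \<le> norm (z \<xi>) * KCt" using nu KCt by simp
          also have "\<dots> \<le> e * KCt" using zxi KCt by (intro mult_right_mono) auto
          finally show ?thesis by (simp add: mult.commute)
        qed
        have b2: "\<bar>u \<bullet> (Wt *v (tanh_vec (y1 \<xi>) - tanh_vec (y2 \<xi>)))\<bar> \<le> KWt * e"
        proof -
          have "\<bar>u \<bullet> (Wt *v (tanh_vec (y1 \<xi>) - tanh_vec (y2 \<xi>)))\<bar> \<le> norm u * norm (Wt *v (tanh_vec (y1 \<xi>) - tanh_vec (y2 \<xi>)))"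
            by (rule Cauchy_Schwarz_ineq2)
          also have "\<dots> \<le> norm (tanh_vec (y1 \<xi>) - tanh_vec (y2 \<xi>)) * KWt" using nu KWt by simp
          also have "\<dots> \<le> e * KWt" using zxi KWt tanh_vec_lip[of "y1 \<xi>" "y2 \<xi>"] unfolding z_def
            by (intro mult_right_mono) auto
          finally show ?thesis by (simp add: mult.commute)
        qed
        have b3: "u \<bullet> (lam *\<^sub>R v \<xi>) \<ge> V / 2"
        proof -
          have "u \<bullet> (lam *\<^sub>R v \<xi>) = u \<bullet> (lam *\<^sub>R v s) + u \<bullet> (lam *\<^sub>R (v \<xi> - v s))"
            by (simp add: algebra_simps inner_diff_right)
          moreover have "\<bar>u \<bullet> (lam *\<^sub>R (v \<xi> - v s))\<bar> \<le> \<bar>lam\<bar> * (L * eps / 2)"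
          proof -
            have "\<bar>u \<bullet> (lam *\<^sub>R (v \<xi> - v s))\<bar> \<le> norm u * norm (lam *\<^sub>R (v \<xi> - v s))" by (rule Cauchy_Schwarz_ineq2)
            also have "\<dots> = \<bar>lam\<bar> * norm (v \<xi> - v s)" using nu by simp
            also have "\<dots> \<le> \<bar>lam\<bar> * (L * eps / 2)" using vclose[of \<xi>] xi by (intro mult_left_mono) auto
            finally show ?thesis .
          qed
          moreover have "norm (lam *\<^sub>R v s) \<ge> \<bar>lam\<bar> * (L * eps)" using nlv vs by (simp add: mult_left_mono)
          moreover have "\<bar>lam\<bar> * (L * eps / 2) = V / 2" "\<bar>lam\<bar> * (L * eps) = V" unfolding V_def by simp_all
          ultimately show ?thesis using ulv by (simp only:)
        qed
        have "u \<bullet> (y1' \<xi> - y2' \<xi>) = - (u \<bullet> (diag3 ct *v z \<xi>)) + u \<bullet> (Wt *v (tanh_vec (y1 \<xi>) - tanh_vec (y2 \<xi>))) + u \<bullet> (lam *\<^sub>R v \<xi>)"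
          unfolding decomp by (simp add: inner_add_right inner_diff_right inner_minus_right)
        then have "u \<bullet> (y1' \<xi> - y2' \<xi>) \<ge> V / 2 - K * e"
          using b1 b2 b3 unfolding K_def by (simp add: algebra_simps abs_le_iff)
        then have "u \<bullet> (y1' \<xi> - y2' \<xi>) \<ge> V / 4" using eK by simp
        then have "h * (u \<bullet> (y1' \<xi> - y2' \<xi>)) \<ge> h * (V / 4)" using hp by (intro mult_left_mono) auto
        then have big: "\<phi> (s+h) - \<phi> s \<ge> 4 * e" using mv eh by simp
        have "\<bar>\<phi> t\<bar> \<le> e" if "s \<le> t" "t \<le> s + h" for t
        proof -
          have "\<bar>\<phi> t\<bar> \<le> norm u * norm (z t)" unfolding \<phi>_def by (rule Cauchy_Schwarz_ineq2)
          then show ?thesis using nu zs[OF that] by simp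
        qed
        from this[of s] this[of "s+h"] have "\<phi> (s+h) - \<phi> s \<le> 2 * e" using hp by (simp add: abs_le_iff)
        then show False using big ep by simp
      qed
      then obtain t0 where t0: "s \<le> t0" "t0 \<le> s + h" "norm (z t0) > e" by blast
      have t00: "t0 \<ge> 0" using t0 s0 by simp
      have Jt: "interval_len_ge {t0<..<t0+Dt} Dt"
        using ilg[OF t00] .
      have sep: "norm (z t) > e/2" if "t \<in> {t0<..<t0+Dt}" for t
      proof -
        have tt: "t \<ge> 0" using that t00 by simp
        have "Mz * \<bar>t - t0\<bar> \<le> Mz * Dt" using that Mzp by (intro mult_left_mono) auto
        also have "\<dots> = e / 2" unfolding Dt_def using Mzp by simp
        finally have "norm (z t - z t0) \<le> e / 2" using zlip[OF tt t00] by simp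
        then show ?thesis using t0(3) norm_triangle_ineq2[of "z t0" "z t"]
          norm_minus_commute[of "z t0" "z t"] by linarith
      qed
      have "\<forall>y1a y2a. resp_sol (diag3 ct) Wt lam g x y1a \<and> y1a 0 = a1 \<and>
                       resp_sol (diag3 ct) Wt lam g xt y2a \<and> y2a 0 = a1 \<longrightarrow>
                       (\<forall>t\<in>{t0<..<t0+Dt}. norm (y1a t - y2a t) > e/2)"
      proof (intro allI impI ballI)
        fix y1a y2a t
        assume H: "resp_sol (diag3 ct) Wt lam g x y1a \<and> y1a 0 = a1 \<and>
                       resp_sol (diag3 ct) Wt lam g xt y2a \<and> y2a 0 = a1" and t: "t \<in> {t0<..<t0+Dt}"
        have tt: "t \<ge> 0" using t t00 by simp
        have "y1a t = y1 t" using resp_unique[of "diag3 ct" Wt lam g x y1a y1 t] H y1 tt by simp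
        moreover have "y2a t = y2 t" using resp_unique[of "diag3 ct" Wt lam g xt y2a y2 t] H y2 tt by simp
        ultimately show "norm (y1a t - y2a t) > e/2" using sep[OF t] unfolding z_def by simp
      qed
      then show ?thesis using a1 xt delt Jt by (intro bexI[of _ a1] exI[of _ xt] exI[of _ "{t0<..<t0+Dt}"]) auto
    qed
  qed
  have e2: "e / 2 > 0" using ep by simp
  show ?thesis
    apply (rule exI[of _ "e/2"])
    apply (rule conjI[OF e2])
    apply (rule exI[of _ Dt])
    apply (rule conjI[OF Dtp])
    using main by blast
qed

end
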